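(* Let $\Omega$ be an infinite set, $G$ a subgroup of $S=\mathrm{Sym}(\Omega)$, and $\Gamma\subseteq\Omega$ a subset such that $|\Omega|^{|\Gamma|}\le|\Omega|$ (e.g., $\Gamma$ finite). Then $G_{(\Gamma)}\approx_{|\Omega|^+}G$.
   Context: $\mathrm{Sym}(\Omega)$ is the group of all permutations of $\Omega$. $G_{(\Gamma)}=\{g\in G:\gamma g=\gamma\ \forall\gamma\in\Gamma\}$. $|\Omega|^+$ is the successor cardinal of $|\Omega|$. For an infinite cardinal $\kappa$ and subgroups $G_1,G_2\le S$, $G_1\preccurlyeq_\kappa G_2$ means there exists $U\subseteq S$ with $|U|<\kappa$ and $G_1\le\langle G_2\cup U\rangle$; $G_1\approx_\kappa G_2$ means $G_1\preccurlyeq_\kappa G_2$ and $G_2\preccurlyeq_\kappa G_1$. *)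

theory Defs
  imports "HOL-Algebra.Bij" "HOL-Algebra.Generated_Groups"
begin

text \<open>Sym(Omega) is modelled as the HOL-Algebra group BijGroup Omega
  (bijections of Omega, extensional outside Omega).\<close>

definition Sym :: "'a set \<Rightarrow> ('a \<Rightarrow> 'a) monoid" where
  "Sym \<Omega> = BijGroup \<Omega>"

definition ptwise_stab :: "('a \<Rightarrow> 'a) set \<Rightarrow> 'a set \<Rightarrow> ('a \<Rightarrow> 'a) set" where
  "ptwise_stab G \<Gamma> = {g \<in> G. \<forall>\<gamma>\<in>\<Gamma>. g \<gamma> = \<gamma>}"

definition preccurly :: "'b rel \<Rightarrow> 'a set \<Rightarrow> ('a \<Rightarrow> 'a) set \<Rightarrow> ('a \<Rightarrow> 'a) set \<Rightarrow> bool" where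
  "preccurly \<kappa> \<Omega> G1 G2 \<longleftrightarrow>
     (\<exists>U. U \<subseteq> carrier (Sym \<Omega>) \<and> (card_of U, \<kappa>) \<in> ordLess \<and>
          G1 \<subseteq> generate (Sym \<Omega>) (G2 \<union> U))"

definition approx_k :: "'b rel \<Rightarrow> 'a set \<Rightarrow> ('a \<Rightarrow> 'a) set \<Rightarrow> ('a \<Rightarrow> 'a) set \<Rightarrow> bool" where
  "approx_k \<kappa> \<Omega> G1 G2 \<longleftrightarrow> preccurly \<kappa> \<Omega> G1 G2 \<and> preccurly \<kappa> \<Omega> G2 G1"

end

theory Submission
  imports Defs
begin

unbundle cardinal_syntax

theorem lemma2p2:
  fixes \<Omega> :: "'a set" and G :: "('a \<Rightarrow> 'a) set" and \<Gamma> :: "'a set"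
  assumes "infinite \<Omega>"
    and "subgroup G (Sym \<Omega>)"
    and "\<Gamma> \<subseteq> \<Omega>"
    and "(BNF_Cardinal_Arithmetic.cexp (card_of \<Omega>) (card_of \<Gamma>), card_of \<Omega>) \<in> ordLeq"
  shows "approx_k (cardSuc (card_of \<Omega>)) \<Omega> (ptwise_stab G \<Gamma>) G"
proof -
  let ?S = "Sym \<Omega>"
  have grp: "group ?S" unfolding Sym_def by (rule group_BijGroup)
  have sub: "G \<subseteq> carrier ?S" using assms(2) subgroup.subset by blast
  have less: "\<And>A::('a\<Rightarrow>'a) set. |A| \<le>o |Func \<Gamma> \<Omega>| \<Longrightarrow> ( |A|, cardSuc |\<Omega>| ) \<in> ordLess"
  proof -
    fix A :: "('a\<Rightarrow>'a) set" assume h: "|A| \<le>o |Func \<Gamma> \<Omega>|"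
    have "|Func \<Gamma> \<Omega>| \<le>o |\<Omega>|" using assms(4) unfolding cexp_def Field_card_of .
    hence "|A| \<le>o |\<Omega>|" using h ordLeq_transitive by blast
    thus "( |A|, cardSuc |\<Omega>| ) \<in> ordLess"
      using cardSuc_greater[OF card_of_Card_order] ordLeq_ordLess_trans by blast
  qed
  have p1: "preccurly (cardSuc |\<Omega>| ) \<Omega> (ptwise_stab G \<Gamma>) G"
    unfolding preccurly_def
  proof (intro exI conjI)
    show "{} \<subseteq> carrier ?S" by simp
    show "( |{}::('a\<Rightarrow>'a) set|, cardSuc |\<Omega>| ) \<in> ordLess"
      by (rule less) (simp add: card_of_empty)
    show "ptwise_stab G \<Gamma> \<subseteq> generate ?S (G \<union> {})"
      unfolding ptwise_stab_def using generate.incl by fastforce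
  qed
  define R where "R = (\<lambda>g. restrict g \<Gamma>) ` G"
  define rep where "rep = (\<lambda>f. SOME g. g \<in> G \<and> restrict g \<Gamma> = f)"
  define U where "U = rep ` R"
  have repG: "rep (restrict g \<Gamma>) \<in> G \<and> restrict (rep (restrict g \<Gamma>)) \<Gamma> = restrict g \<Gamma>" if "g \<in> G" for g
  proof -
    have "\<exists>x. x \<in> G \<and> restrict x \<Gamma> = restrict g \<Gamma>" using that by blast
    thus ?thesis unfolding rep_def by (rule someI_ex)
  qed
  have UG: "U \<subseteq> G" unfolding U_def R_def using repG by blast
  have RF: "R \<subseteq> Func \<Gamma> \<Omega>"
  proof
    fix f assume "f \<in> R"
    then obtain g where g: "g \<in> G" "f = restrict g \<Gamma>" unfolding R_def by blast
    have "g \<in> Bij \<Omega>" using g sub unfolding Sym_def BijGroup_def by auto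
    hence "g \<in> \<Omega> \<rightarrow> \<Omega>" by (rule Bij_imp_funcset)
    thus "f \<in> Func \<Gamma> \<Omega>" using g assms(3) unfolding Func_def by auto
  qed
  have p2: "preccurly (cardSuc |\<Omega>| ) \<Omega> G (ptwise_stab G \<Gamma>)"
    unfolding preccurly_def
  proof (intro exI conjI)
    show "U \<subseteq> carrier ?S" using UG sub by blast
    have "|U| \<le>o |R|" unfolding U_def by (rule card_of_image)
    moreover have "|R| \<le>o |Func \<Gamma> \<Omega>|" using RF by (rule card_of_mono1)
    ultimately show "( |U|, cardSuc |\<Omega>| ) \<in> ordLess"
      using less ordLeq_transitive by blast
    show "G \<subseteq> generate ?S (ptwise_stab G \<Gamma> \<union> U)"
    proof
      fix g assume gG: "g \<in> G"
      define h where "h = rep (restrict g \<Gamma>)"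
      have hG: "h \<in> G" and hr: "restrict h \<Gamma> = restrict g \<Gamma>" using repG[OF gG] h_def by auto
      have hU: "h \<in> U" unfolding h_def U_def R_def using gG by blast
      define k where "k = inv\<^bsub>?S\<^esub> h \<otimes>\<^bsub>?S\<^esub> g"
      have hc: "h \<in> carrier ?S" and gc: "g \<in> carrier ?S" using hG gG sub by auto
      have kG: "k \<in> G" unfolding k_def using assms(2) hG gG
        by (simp add: subgroup.m_closed subgroup.m_inv_closed)
      have kc: "k \<in> carrier ?S" using kG sub by auto
      have hk: "h \<otimes>\<^bsub>?S\<^esub> k = g" unfolding k_def using grp hc gc
        by (simp add: group.inv_solve_left' group.inv_closed monoid.m_assoc[symmetric] group.is_monoid group.r_inv monoid.l_one)
      have hB: "h \<in> Bij \<Omega>" and kB: "k \<in> Bij \<Omega>" using hc kc unfolding Sym_def BijGroup_def by auto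
      have kfix: "\<forall>\<gamma>\<in>\<Gamma>. k \<gamma> = \<gamma>"
      proof
        fix \<gamma> assume gm: "\<gamma> \<in> \<Gamma>"
        hence gO: "\<gamma> \<in> \<Omega>" using assms(3) by auto
        have "h (k \<gamma>) = g \<gamma>" using hk[symmetric] hB kB gO
          unfolding Sym_def BijGroup_def by (simp add: compose_def)
        also have "\<dots> = h \<gamma>" using hr gm by (metis restrict_apply')
        finally have "h (k \<gamma>) = h \<gamma>" .
        moreover have "k \<gamma> \<in> \<Omega>" using Bij_imp_funcset[OF kB] gO by auto
        moreover have "inj_on h \<Omega>" using hB unfolding Bij_def bij_betw_def by auto
        ultimately show "k \<gamma> = \<gamma>" using gO by (auto dest: inj_onD)
      qed
      have "k \<in> ptwise_stab G \<Gamma>" unfolding ptwise_stab_def using kG kfix by auto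
      hence "k \<in> generate ?S (ptwise_stab G \<Gamma> \<union> U)" by (blast intro: generate.incl)
      moreover have "h \<in> generate ?S (ptwise_stab G \<Gamma> \<union> U)" using hU by (blast intro: generate.incl)
      ultimately show "g \<in> generate ?S (ptwise_stab G \<Gamma> \<union> U)"
        using hk generate.eng by metis
    qed
  qed
  show ?thesis unfolding approx_k_def using p1 p2 by blast
qed

end
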